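(* Let $n\ge 1$ be an integer and $p\in\mathbb{R}$ with $p\neq 1$. Let $w$ be the fundamental solution of the $p$-Laplace equation in $\mathbb{R}^n$, i.e. \[w(x)=-c_{n,p}\tfrac{p-1}{p-n}|x|^{\frac{p-n}{p-1}}\ \text{ if } p\neq n,\qquad w(x)=-c_{n,n}\ln|x|\ \text{ if } p=n,\] where $c_{n,p}>0$ is a constant. Let $N\ge1$, $a_1,\dots,a_N>0$, $y_1,\dots,y_N\in\mathbb{R}^n$, and $V(x):=\sum_{i=1}^N a_i w(x-y_i)$. Then, at all points $x\in\mathbb{R}^n\setminus\{y_1,\dots,y_N\}$ where $\nabla V(x)\neq 0$ (so that $\Delta_pV(x)$ is defined), $\Delta_p V(x)$ has one and the same sign, namely: if $n=1$ or $p=2$ or $p+n=2$, then $\Delta_pV=0$; otherwise, $\Delta_pV\le 0$ at all such points when $\frac{(p-2)(p+n-2)}{p-1}>0$, and $\Delta_pV\ge 0$ at all such points when $\frac{(p-2)(p+n-2)}{p-1}<0$.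
   Context: For a function $u$ that is $C^2$ near $x$ with $\nabla u(x)\neq0$, the $p$-Laplacian is $\Delta_p u=\operatorname{div}(|\nabla u|^{p-2}\nabla u)=|\nabla u|^{p-2}\Big((p-2)\frac{\nabla u\,(\mathcal{H}u)\,\nabla u^T}{|\nabla u|^2}+\Delta u\Big)$, where $\mathcal{H}u$ is the Hessian matrix of $u$ and $\nabla u$ is a row vector. *)

theory Defs
  imports "HOL-Analysis.Analysis"
begin

definition partial :: "(real^'n \<Rightarrow> real) \<Rightarrow> 'n \<Rightarrow> real^'n \<Rightarrow> real" where
  "partial u i x = deriv (\<lambda>t. u (x + t *\<^sub>R axis i 1)) 0"

definition grad :: "(real^'n \<Rightarrow> real) \<Rightarrow> real^'n \<Rightarrow> real^'n" where
  "grad u x = (\<chi> i. partial u i x)"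

definition hess :: "(real^'n \<Rightarrow> real) \<Rightarrow> real^'n \<Rightarrow> real^'n^'n" where
  "hess u x = (\<chi> i j. partial (\<lambda>z. partial u j z) i x)"

definition laplacian :: "(real^'n \<Rightarrow> real) \<Rightarrow> real^'n \<Rightarrow> real" where
  "laplacian u x = (\<Sum>i\<in>UNIV. hess u x $ i $ i)"

text \<open>p-Laplacian, for u C^2 near x with nonzero gradient (formula from the paper).\<close>
definition p_laplacian :: "real \<Rightarrow> (real^'n \<Rightarrow> real) \<Rightarrow> real^'n \<Rightarrow> real" where
  "p_laplacian p u x =
     norm (grad u x) powr (p - 2) *
     ((p - 2) * (grad u x \<bullet> (hess u x *v grad u x)) / (norm (grad u x))\<^sup>2
      + laplacian u x)"

definition fund_sol :: "real \<Rightarrow> real \<Rightarrow> real^'n \<Rightarrow> real" where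
  "fund_sol c p x =
     (if p \<noteq> real CARD('n)
      then - c * (p - 1) / (p - real CARD('n)) * norm x powr ((p - real CARD('n)) / (p - 1))
      else - c * ln (norm x))"

end

theory Submission
  imports Defs
begin


lemma partial_from_deriv:
  fixes f :: "real^'n \<Rightarrow> real"
  assumes "(f has_derivative f') (at x)"
  shows "partial f i x = f' (axis i 1)"
proof -
  have lin: "linear f'" using assms has_derivative_linear by blast
  have l: "((\<lambda>t::real. x + t *\<^sub>R axis i 1) has_derivative (\<lambda>t. t *\<^sub>R axis i 1)) (at 0)"
    by (auto intro!: derivative_eq_intros)
  have "((\<lambda>t. f (x + t *\<^sub>R axis i 1)) has_derivative (\<lambda>t. f' (t *\<^sub>R axis i 1))) (at 0)"
    using has_derivative_compose[OF l] assms by simp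
  moreover have "(\<lambda>t. f' (t *\<^sub>R axis i 1)) = (\<lambda>t. f' (axis i 1) * t)"
    using lin by (auto simp: linear_scale)
  ultimately have "((\<lambda>t. f (x + t *\<^sub>R axis i 1)) has_real_derivative f' (axis i 1)) (at 0)"
    by (simp add: has_field_derivative_def)
  then show ?thesis unfolding partial_def by (rule DERIV_imp_deriv)
qed

lemma norm_powr_deriv:
  fixes z w :: "real^'n"
  assumes "z \<noteq> w"
  shows "((\<lambda>x. norm (x - w) powr a) has_derivative (\<lambda>h. a * norm (z - w) powr (a - 2) * ((z - w) \<bullet> h))) (at z)"
proof -
  have n: "norm (z - w) > 0" using assms by simp
  have d: "((\<lambda>x. norm (x - w)) has_derivative (\<lambda>h. h \<bullet> sgn (z - w))) (at z)"
    using has_derivative_compose[OF has_derivative_diff[OF has_derivative_ident has_derivative_const] has_derivative_norm[of "z - w"]] assms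
    by simp
  have "((\<lambda>x. norm (x - w) powr a) has_derivative (\<lambda>h. (norm (z - w) powr a) * (0 * ln (norm (z-w)) + (h \<bullet> sgn (z - w)) * a / norm (z - w)))) (at z)"
    by (rule has_derivative_powr[OF d has_derivative_const n]) simp
  moreover have "(\<lambda>h. (norm (z - w) powr a) * (0 * ln (norm (z-w)) + (h \<bullet> sgn (z - w)) * a / norm (z - w)))
     = (\<lambda>h. a * norm (z - w) powr (a - 2) * ((z - w) \<bullet> h))"
  proof
    fix h
    have "norm (z - w) powr (a - 2) = norm (z-w) powr a / (norm (z - w))^2"
      using n by (simp add: powr_diff)
    moreover have "h \<bullet> sgn (z - w) = ((z - w) \<bullet> h) / norm (z - w)"
      by (simp add: sgn_div_norm inner_commute divide_inverse_commute del: scaleR_diff_right)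
    ultimately show "(norm (z - w) powr a) * (0 * ln (norm (z-w)) + (h \<bullet> sgn (z - w)) * a / norm (z - w)) = a * norm (z - w) powr (a - 2) * ((z - w) \<bullet> h)"
    proof -
      define r where "r = norm (z - w)"
      define q where "q = norm (z - w) powr (a - 2)"
      define s where "s = h \<bullet> sgn (z - w)"
      have e1: "norm (z-w) powr a = r * r * q" using \<open>norm (z - w) powr (a - 2) = _\<close> n
        unfolding r_def q_def by (simp add: power2_eq_square field_simps)
      have e2: "(z - w) \<bullet> h = s * r" using \<open>h \<bullet> sgn (z - w) = _\<close> n unfolding r_def s_def by (simp add: field_simps)
      have qr: "q = r powr (a - 2)" unfolding q_def r_def ..
      show ?thesis unfolding e1 e2 using n qr
        by (simp add: r_def[symmetric] s_def[symmetric] q_def[symmetric] field_simps)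
    qed
  qed
  ultimately show ?thesis by simp
qed

lemma fund_sol_deriv:
  fixes z w :: "real^'n"
  assumes p1: "p \<noteq> 1" and zw: "z \<noteq> w"
  shows "((\<lambda>x. fund_sol c p (x - w)) has_derivative
     (\<lambda>h. - c * norm (z - w) powr ((2 - real CARD('n) - p) / (p - 1)) * ((z - w) \<bullet> h))) (at z)"
proof (cases "p = real CARD('n)")
  case False
  let ?a = "(p - real CARD('n)) / (p - 1)"
  have fs: "(\<lambda>x. fund_sol c p (x - w)) = (\<lambda>x. (- c * (p - 1) / (p - real CARD('n))) * norm (x - w) powr ?a)"
    using False by (simp add: fund_sol_def fun_eq_iff)
  have ex: "?a - 2 = (2 - real CARD('n) - p) / (p - 1)"
    using p1 by (simp add: field_simps)
  show ?thesis unfolding fs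
    apply (rule has_derivative_eq_rhs[OF has_derivative_mult_right[OF norm_powr_deriv[OF zw, of ?a]]])
  proof
    fix h
    have k: "(- c * (p - 1) / (p - real CARD('n))) * ?a = - c"
    proof -
      have a1: "p - 1 \<noteq> 0" "p - real CARD('n) \<noteq> 0" using p1 False by auto
      have "(- c * (p - 1) / (p - real CARD('n))) * ?a = - c * (((p - 1) / (p - real CARD('n))) * ((p - real CARD('n)) / (p - 1)))"
        by simp
      also have "((p - 1) / (p - real CARD('n))) * ((p - real CARD('n)) / (p - 1)) = 1" using a1 by simp
      finally show ?thesis by simp
    qed
    show "(- c * (p - 1) / (p - real CARD('n))) * (?a * norm (z - w) powr (?a - 2) * ((z - w) \<bullet> h)) =
        - c * norm (z - w) powr ((2 - real CARD('n) - p) / (p - 1)) * ((z - w) \<bullet> h)"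
      unfolding ex[symmetric] using k by (metis mult.assoc)
  qed
next
  case True
  have n: "norm (z - w) > 0" using zw by simp
  have fs: "(\<lambda>x. fund_sol c p (x - w)) = (\<lambda>x. - c * ln (norm (x - w)))"
    using True by (simp add: fund_sol_def fun_eq_iff)
  have ex: "(2 - real CARD('n) - p) / (p - 1) = -2"
    using p1 True by (simp add: field_simps)
  have d: "((\<lambda>x. norm (x - w)) has_derivative (\<lambda>h. h \<bullet> sgn (z - w))) (at z)"
    using has_derivative_compose[OF has_derivative_diff[OF has_derivative_ident has_derivative_const] has_derivative_norm[of "z - w"]] zw
    by simp
  have "((\<lambda>x. - c * ln (norm (x - w))) has_derivative (\<lambda>h. - c * ((h \<bullet> sgn (z - w)) * inverse (norm (z - w))))) (at z)"
    by (rule has_derivative_mult_right, rule has_derivative_ln[where g="\<lambda>x. norm (x - w)", OF _ d], simp add: zw)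
  moreover have "(\<lambda>h. - c * ((h \<bullet> sgn (z - w)) * inverse (norm (z - w)))) = (\<lambda>h. - c * norm (z - w) powr (-2) * ((z - w) \<bullet> h))"
  proof
    fix h
    have "h \<bullet> sgn (z - w) = ((z - w) \<bullet> h) / norm (z - w)"
      by (simp add: sgn_div_norm inner_commute divide_inverse_commute del: scaleR_diff_right)
    then show "- c * ((h \<bullet> sgn (z - w)) * inverse (norm (z - w))) = - c * norm (z - w) powr (-2) * ((z - w) \<bullet> h)"
      using n by (simp add: powr_minus power2_eq_square field_simps)
  qed
  ultimately show ?thesis unfolding fs ex by simp
qed




lemma alg_hess:
  fixes H :: "real^'n^'n" and G :: "real^'n" and d :: "nat \<Rightarrow> real^'n"
  assumes H: "\<And>i j. H $ i $ j = (\<Sum>k\<in>K. \<alpha> k * (d k $ i * d k $ j) + (if i = j then \<beta> k else 0))"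
  shows "G \<bullet> (H *v G) = (\<Sum>k\<in>K. \<alpha> k * (d k \<bullet> G)^2 + \<beta> k * (G \<bullet> G))"
    and "(\<Sum>i\<in>UNIV. H $ i $ i) = (\<Sum>k\<in>K. \<alpha> k * (d k \<bullet> d k) + \<beta> k * real CARD('n))"
proof -
  have HG: "(H *v G) $ i = (\<Sum>k\<in>K. \<alpha> k * d k $ i * (d k \<bullet> G) + \<beta> k * G $ i)" for i
  proof -
    have "(H *v G) $ i = (\<Sum>j\<in>UNIV. \<Sum>k\<in>K. (\<alpha> k * (d k $ i * d k $ j) + (if i = j then \<beta> k else 0)) * G $ j)"
      by (simp add: matrix_vector_mult_def H sum_distrib_right)
    also have "\<dots> = (\<Sum>k\<in>K. \<Sum>j\<in>UNIV. (\<alpha> k * (d k $ i * d k $ j) + (if i = j then \<beta> k else 0)) * G $ j)"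
      by (rule sum.swap)
    also have "\<dots> = (\<Sum>k\<in>K. \<alpha> k * d k $ i * (d k \<bullet> G) + \<beta> k * G $ i)"
    proof (rule sum.cong[OF refl])
      fix k
      have "(\<Sum>j\<in>UNIV. (\<alpha> k * (d k $ i * d k $ j) + (if i = j then \<beta> k else 0)) * G $ j)
         = (\<Sum>j\<in>UNIV. \<alpha> k * d k $ i * (d k $ j * G $ j)) + (\<Sum>j\<in>UNIV. (if i = j then \<beta> k * G $ j else 0))"
        unfolding sum.distrib[symmetric] by (rule sum.cong) (auto simp: algebra_simps)
      also have "\<dots> = \<alpha> k * d k $ i * (d k \<bullet> G) + \<beta> k * G $ i"
        by (simp add: inner_vec_def sum_distrib_left)
      finally show "(\<Sum>j\<in>UNIV. (\<alpha> k * (d k $ i * d k $ j) + (if i = j then \<beta> k else 0)) * G $ j)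
         = \<alpha> k * d k $ i * (d k \<bullet> G) + \<beta> k * G $ i" .
    qed
    finally show ?thesis .
  qed
  have "G \<bullet> (H *v G) = (\<Sum>i\<in>UNIV. \<Sum>k\<in>K. G $ i * (\<alpha> k * d k $ i * (d k \<bullet> G) + \<beta> k * G $ i))"
    by (simp add: inner_vec_def HG sum_distrib_left)
  also have "\<dots> = (\<Sum>k\<in>K. \<Sum>i\<in>UNIV. G $ i * (\<alpha> k * d k $ i * (d k \<bullet> G) + \<beta> k * G $ i))"
    by (rule sum.swap)
  also have "\<dots> = (\<Sum>k\<in>K. \<alpha> k * (d k \<bullet> G)^2 + \<beta> k * (G \<bullet> G))"
  proof (rule sum.cong[OF refl])
    fix k
    have "(\<Sum>i\<in>UNIV. G $ i * (\<alpha> k * d k $ i * (d k \<bullet> G) + \<beta> k * G $ i))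
       = \<alpha> k * (d k \<bullet> G) * (\<Sum>i\<in>UNIV. d k $ i * G $ i) + \<beta> k * (\<Sum>i\<in>UNIV. G $ i * G $ i)"
      by (simp add: sum.distrib sum_distrib_left algebra_simps)
    then show "(\<Sum>i\<in>UNIV. G $ i * (\<alpha> k * d k $ i * (d k \<bullet> G) + \<beta> k * G $ i)) = \<alpha> k * (d k \<bullet> G)^2 + \<beta> k * (G \<bullet> G)"
      by (simp add: inner_vec_def power2_eq_square)
  qed
  finally show "G \<bullet> (H *v G) = (\<Sum>k\<in>K. \<alpha> k * (d k \<bullet> G)^2 + \<beta> k * (G \<bullet> G))" .
  have "(\<Sum>i\<in>UNIV. H $ i $ i) = (\<Sum>i\<in>UNIV. \<Sum>k\<in>K. \<alpha> k * (d k $ i * d k $ i) + \<beta> k)"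
    by (simp add: H)
  also have "\<dots> = (\<Sum>k\<in>K. \<Sum>i\<in>UNIV. \<alpha> k * (d k $ i * d k $ i) + \<beta> k)"
    by (rule sum.swap)
  also have "\<dots> = (\<Sum>k\<in>K. \<alpha> k * (d k \<bullet> d k) + \<beta> k * real CARD('n))"
    by (simp add: sum.distrib inner_vec_def sum_distrib_left mult.commute)
  finally show "(\<Sum>i\<in>UNIV. H $ i $ i) = (\<Sum>k\<in>K. \<alpha> k * (d k \<bullet> d k) + \<beta> k * real CARD('n))" .
qed



lemma term_id:
  fixes p g K n A Q X D GG :: real
  assumes "GG \<noteq> 0" "(p-2)*g = -K" "p - 2 + g + n = K"
  shows "(p-2)*((-A*g*Q)*X + (-A*Q*D)*GG)/GG + ((-A*g*Q)*D + (-A*Q*D)*n) = -K*A*Q*(D - X/GG)"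
proof -
  have "(p-2)*((-A*g*Q)*X + (-A*Q*D)*GG)/GG + ((-A*g*Q)*D + (-A*Q*D)*n) = -A*Q*(((p-2)*g)*X/GG + (p-2+g+n)*D)"
    using assms(1) by (simp add: field_simps)
  also have "\<dots> = -K*A*Q*(D - X/GG)" unfolding assms(2,3) by (simp add: field_simps)
  finally show ?thesis .
qed

lemma axis_nth_gen: "(axis i (1::real) :: real^'n) $ j = (if j = i then 1 else 0)"
  by (simp add: axis_def)

lemma card1_inner:
  fixes d G :: "real^'n"
  assumes "CARD('n) = 1"
  shows "(d \<bullet> G)^2 = (d \<bullet> d) * (G \<bullet> G)"
proof -
  obtain i0 where u: "(UNIV :: 'n set) = {i0}" using assms card_1_singletonE by blast
  show ?thesis by (simp add: inner_vec_def u power2_eq_square)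
qed

theorem lemma3p1:
  fixes p c :: real and N :: nat and a :: "nat \<Rightarrow> real" and y :: "nat \<Rightarrow> real^'n"
    and V :: "real^'n \<Rightarrow> real"
  assumes "p \<noteq> 1" and "c > 0" and "N \<ge> 1"
    and "\<And>i. i \<in> {1..N} \<Longrightarrow> a i > 0"
    and "V = (\<lambda>x. \<Sum>i=1..N. a i * fund_sol c p (x - y i))"
  shows "\<forall>x. x \<notin> y ` {1..N} \<and> grad V x \<noteq> 0 \<longrightarrow>
     ((CARD('n) = 1 \<or> p = 2 \<or> p + real CARD('n) = 2) \<longrightarrow> p_laplacian p V x = 0) \<and>
     (\<not> (CARD('n) = 1 \<or> p = 2 \<or> p + real CARD('n) = 2) \<and>
        (p - 2) * (p + real CARD('n) - 2) / (p - 1) > 0 \<longrightarrow> p_laplacian p V x \<le> 0) \<and>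
     (\<not> (CARD('n) = 1 \<or> p = 2 \<or> p + real CARD('n) = 2) \<and>
        (p - 2) * (p + real CARD('n) - 2) / (p - 1) < 0 \<longrightarrow> p_laplacian p V x \<ge> 0)"
proof (intro allI impI)
  fix x assume xa: "x \<notin> y ` {1..N} \<and> grad V x \<noteq> 0"
  define n where "n = real CARD('n)"
  define g where "g = (2 - n - p) / (p - 1)"
  define K where "K = (p - 2) * (p + n - 2) / (p - 1)"
  define S where "S = UNIV - y ` {1..N}"
  define d where "d k = x - y k" for k
  define Q where "Q k = norm (d k) powr (g - 2)" for k
  define F where "F j z = (\<Sum>k=1..N. a k * (- c * norm (z - y k) powr g * (z - y k) $ j))" for j z
  have p1: "p - 1 \<noteq> 0" using assms(1) by simp
  have oS: "open S" unfolding S_def by (intro open_Diff open_UNIV finite_imp_closed) simp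
  have xS: "x \<in> S" using xa unfolding S_def by simp
  have dne: "k \<in> {1..N} \<Longrightarrow> d k \<noteq> 0" for k using xa unfolding d_def by auto
  have dV: "(V has_derivative (\<lambda>h. \<Sum>k=1..N. a k * (- c * norm (z - y k) powr g * ((z - y k) \<bullet> h)))) (at z)"
    if "z \<in> S" for z
    unfolding assms(5) g_def n_def
    by (intro has_derivative_sum has_derivative_mult_right fund_sol_deriv assms(1)) (use that in \<open>auto simp: S_def\<close>)
  have pV: "partial V j z = F j z" if "z \<in> S" for j z
    unfolding partial_from_deriv[OF dV[OF that]] F_def by (simp add: inner_axis)
  have G: "grad V x = (\<chi> j. F j x)" unfolding grad_def using pV[OF xS] by simp
  have dF: "(F j has_derivative (\<lambda>h. \<Sum>k=1..N. a k * (- c * (norm (d k) powr g * h $ j + (g * Q k * (d k \<bullet> h)) * d k $ j)))) (at x)" for j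
    unfolding F_def
  proof (intro has_derivative_sum has_derivative_mult_right)
    fix k assume k: "k \<in> {1..N}"
    have v: "((\<lambda>z. (z - y k) $ j) has_derivative (\<lambda>h. h $ j)) (at x)"
      by (rule has_derivative_eq_rhs[OF bounded_linear.has_derivative[OF bounded_linear_vec_nth has_derivative_diff[OF has_derivative_ident has_derivative_const]]]) simp
    have "((\<lambda>z. norm (z - y k) powr g * (z - y k) $ j) has_derivative (\<lambda>h. norm (x - y k) powr g * h $ j + (g * norm (x - y k) powr (g - 2) * ((x - y k) \<bullet> h)) * (x - y k) $ j)) (at x)"
      by (rule has_derivative_mult[OF norm_powr_deriv v]) (use dne[OF k] in \<open>simp add: d_def\<close>)
    then have "((\<lambda>z. - c * (norm (z - y k) powr g * (z - y k) $ j)) has_derivative (\<lambda>h. - c * (norm (d k) powr g * h $ j + (g * Q k * (d k \<bullet> h)) * d k $ j))) (at x)"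
      unfolding Q_def d_def by (rule has_derivative_mult_right)
    then show "((\<lambda>z. - c * norm (z - y k) powr g * (z - y k) $ j) has_derivative (\<lambda>h. - c * (norm (d k) powr g * h $ j + (g * Q k * (d k \<bullet> h)) * d k $ j))) (at x)"
      by (simp add: mult.assoc)
  qed
  have Hs: "hess V x $ i $ j = (\<Sum>k\<in>{1..N}. (- a k * c * g * Q k) * (d k $ i * d k $ j) + (if i = j then - a k * c * norm (d k) powr g else 0))" for i j
  proof -
    have "((\<lambda>z. partial V j z) has_derivative (\<lambda>h. \<Sum>k=1..N. a k * (- c * (norm (d k) powr g * h $ j + (g * Q k * (d k \<bullet> h)) * d k $ j)))) (at x)"
      by (rule has_derivative_transform_within_open[OF dF oS xS]) (simp add: pV)
    then have "hess V x $ i $ j = (\<Sum>k=1..N. a k * (- c * (norm (d k) powr g * axis i 1 $ j + (g * Q k * (d k \<bullet> axis i 1)) * d k $ j)))"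
      unfolding hess_def by (simp add: partial_from_deriv)
    also have "\<dots> = (\<Sum>k\<in>{1..N}. (- a k * c * g * Q k) * (d k $ i * d k $ j) + (if i = j then - a k * c * norm (d k) powr g else 0))"
      by (rule sum.cong[OF refl]) (simp add: inner_axis axis_nth_gen algebra_simps)
    finally show ?thesis .
  qed
  define GG where "GG = grad V x \<bullet> grad V x"
  have Gne: "grad V x \<noteq> 0" using xa by simp
  have GG0: "GG > 0" unfolding GG_def using Gne by simp
  have nG: "(norm (grad V x))\<^sup>2 = GG" unfolding GG_def by (simp add: power2_norm_eq_inner)
  have R: "norm (d k) powr g = Q k * (d k \<bullet> d k)" if "k \<in> {1..N}" for k
  proof -
    have "norm (d k) > 0" using dne[OF that] by simp
    have "norm (d k) powr g = norm (d k) powr ((g - 2) + 2)" by simp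
    also have "\<dots> = norm (d k) powr (g - 2) * norm (d k) powr 2" by (rule powr_add)
    also have "norm (d k) powr 2 = (norm (d k))\<^sup>2" using \<open>norm (d k) > 0\<close> by (simp add: powr_numeral)
    finally have "norm (d k) powr g = norm (d k) powr (g - 2) * (norm (d k))\<^sup>2" .
    then show ?thesis unfolding Q_def by (simp add: power2_norm_eq_inner)
  qed
  have Hs': "hess V x $ i $ j = (\<Sum>k\<in>{1..N}. (- a k * c * g * Q k) * (d k $ i * d k $ j) + (if i = j then - a k * c * Q k * (d k \<bullet> d k) else 0))" for i j
    unfolding Hs by (rule sum.cong) (auto simp: R)
  note hh = alg_hess(1)[of "hess V x", OF Hs', of "grad V x"] alg_hess(2)[of "hess V x", OF Hs']
  have Kg1: "(p-2)*g = -K" unfolding g_def K_def using p1 by (simp add: field_simps)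
  have Kg2: "p - 2 + g + n = K" unfolding g_def K_def using p1 by (simp add: field_simps)
  define T where "T = (\<Sum>k\<in>{1..N}. a k * Q k * ((d k \<bullet> d k) - (d k \<bullet> grad V x)^2 / GG))"
  have PL: "p_laplacian p V x = - K * c * norm (grad V x) powr (p - 2) * T"
  proof -
    have "p_laplacian p V x = norm (grad V x) powr (p - 2) *
       ((p - 2) * (\<Sum>k\<in>{1..N}. (- a k * c * g * Q k) * (d k \<bullet> grad V x)^2 + (- a k * c * Q k * (d k \<bullet> d k)) * GG) / GG
        + (\<Sum>k\<in>{1..N}. (- a k * c * g * Q k) * (d k \<bullet> d k) + (- a k * c * Q k * (d k \<bullet> d k)) * n))"
      unfolding p_laplacian_def laplacian_def hh nG n_def GG_def by simp
    also have "(p - 2) * (\<Sum>k\<in>{1..N}. (- a k * c * g * Q k) * (d k \<bullet> grad V x)^2 + (- a k * c * Q k * (d k \<bullet> d k)) * GG) / GG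
        + (\<Sum>k\<in>{1..N}. (- a k * c * g * Q k) * (d k \<bullet> d k) + (- a k * c * Q k * (d k \<bullet> d k)) * n)
      = (\<Sum>k\<in>{1..N}. (p - 2) * ((- (a k * c) * g * Q k) * (d k \<bullet> grad V x)^2 + (- (a k * c) * Q k * (d k \<bullet> d k)) * GG) / GG
        + ((- (a k * c) * g * Q k) * (d k \<bullet> d k) + (- (a k * c) * Q k * (d k \<bullet> d k)) * n))"
      by (simp add: sum_distrib_left sum_divide_distrib sum.distrib)
    also have "\<dots> = (\<Sum>k\<in>{1..N}. - K * (a k * c) * Q k * ((d k \<bullet> d k) - (d k \<bullet> grad V x)^2 / GG))"
      by (rule sum.cong[OF refl], rule term_id) (use GG0 Kg1 Kg2 in auto)
    also have "\<dots> = - K * c * T" unfolding T_def by (simp add: sum_distrib_left algebra_simps)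
    finally show ?thesis by simp
  qed
  have Tnn: "T \<ge> 0" unfolding T_def
  proof (rule sum_nonneg)
    fix k assume k: "k \<in> {1..N}"
    have "(d k \<bullet> grad V x)^2 \<le> (d k \<bullet> d k) * GG" unfolding GG_def by (rule Cauchy_Schwarz_ineq)
    then have "(d k \<bullet> grad V x)^2 / GG \<le> d k \<bullet> d k" using GG0 by (simp add: divide_le_eq)
    moreover have "Q k > 0" unfolding Q_def using dne[OF k] by simp
    ultimately show "a k * Q k * ((d k \<bullet> d k) - (d k \<bullet> grad V x)^2 / GG) \<ge> 0"
      using assms(4)[OF k] by simp
  qed
  have T1: "CARD('n) = 1 \<Longrightarrow> T = 0" unfolding T_def GG_def using GG0
    by (intro sum.neutral) (simp add: card1_inner GG_def)
  have P0: "norm (grad V x) powr (p - 2) \<ge> 0" by simp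
  have Kdef: "K = (p - 2) * (p + real CARD('n) - 2) / (p - 1)" unfolding K_def n_def ..
  have c1: "(CARD('n) = 1 \<or> p = 2 \<or> p + real CARD('n) = 2) \<longrightarrow> p_laplacian p V x = 0" (is ?c1)
    using T1 unfolding PL Kdef by auto
  have c2: "\<not> (CARD('n) = 1 \<or> p = 2 \<or> p + real CARD('n) = 2) \<and>
        (p - 2) * (p + real CARD('n) - 2) / (p - 1) > 0 \<longrightarrow> p_laplacian p V x \<le> 0" (is ?c2)
    unfolding PL Kdef[symmetric] using Tnn P0 assms(2)
    by (auto intro!: mult_nonneg_nonneg simp: mult_le_0_iff)
  have c3: "\<not> (CARD('n) = 1 \<or> p = 2 \<or> p + real CARD('n) = 2) \<and>
        (p - 2) * (p + real CARD('n) - 2) / (p - 1) < 0 \<longrightarrow> p_laplacian p V x \<ge> 0" (is ?c3)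
    unfolding PL Kdef[symmetric] using Tnn P0 assms(2)
    by (auto intro!: mult_nonpos_nonneg)
  show "?c1 \<and> ?c2 \<and> ?c3" using c1 c2 c3 by (intro conjI)
qed

end
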